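(* Let $w=(w(m))_{m\in2\mathbb{Z}}\in\ell^2(2\mathbb{Z})$ and $r(m)=\max(|w(m)|,|w(-m)|)$, $m\in2\mathbb{Z}$. For $n\in\mathbb{N}$, $s\ge2$ and $m\in n+2\mathbb{Z}$ define $$\sigma_2(n,s;m)=\sum_{j_1,\dots,j_s\neq\pm n}r(m+j_1)\,\frac{r(j_1+j_2)}{|n+j_2|}\cdots\frac{r(j_{s-2}+j_{s-1})}{|n+j_{s-1}|}\cdot\frac{r(j_{s-1}+j_s)}{|n^2-j_s^2|}$$ (for $s=2$ this is $\sum_{j_1,j_2\neq\pm n}r(m+j_1)\frac{r(j_1+j_2)}{|n^2-j_2^2|}$), where $j_1,\dots,j_s$ range over $n+2\mathbb{Z}\setminus\{n,-n\}$, and for $s\in\mathbb{N}$, $k\in n+2\mathbb{Z}$, $$\sigma_1(n,s;k)=\sum_{j_1,\dots,j_s\neq n}\frac{r(k+j_1)}{|n-j_1|}\cdot\frac{r(j_1+j_2)}{|n-j_2|}\cdots\frac{r(j_{s-1}+j_s)}{|n-j_s|}$$ with indices in $n+2\mathbb{Z}\setminus\{n\}$. Then $$\sigma_2(n,2;m)\le\|r\|^2\cdot\frac{2\log 6n}{n},$$ and for $s\ge3$, $$\sigma_2(n,s;m)\le\|r\|^2\cdot\frac{2\log 6n}{n}\cdot\sup_k\sigma_1(n,s-2;k).$$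
   Context: $\|r\|$ denotes the $\ell^2(2\mathbb{Z})$ norm of $r$; note $r(-m)=r(m)\ge0$. *)

theory Defs
  imports "HOL-Analysis.Analysis"
begin

text \<open>Sequences indexed by 2Z are modelled as functions int => complex; only values at even
  arguments matter.  r(m) = max(|w(m)|, |w(-m)|).\<close>
definition rr :: "(int \<Rightarrow> complex) \<Rightarrow> int \<Rightarrow> real" where
  "rr w m = max (cmod (w m)) (cmod (w (- m)))"

definition l2sq :: "(int \<Rightarrow> complex) \<Rightarrow> ennreal" where
  "l2sq w = (\<Sum>\<^sub>\<infinity> m \<in> {m::int. even m}. ennreal ((rr w m)\<^sup>2))"

text \<open>Index tuples (j_1,...,j_s) are lists js of length s, js!0 = j_1.\<close>
definition sigma2 :: "(int \<Rightarrow> complex) \<Rightarrow> nat \<Rightarrow> nat \<Rightarrow> int \<Rightarrow> ennreal" where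
  "sigma2 w n s m =
    (\<Sum>\<^sub>\<infinity> js \<in> {js. length js = s \<and>
                    (\<forall>j\<in>set js. even (j - int n) \<and> j \<noteq> int n \<and> j \<noteq> - int n)}.
       ennreal (rr w (m + js!0)
         * (\<Prod>i\<in>{1..<s-1}. rr w (js!(i-1) + js!i) / \<bar>real_of_int (int n + js!i)\<bar>)
         * (rr w (js!(s-2) + js!(s-1)) / \<bar>real_of_int (int n ^ 2 - (js!(s-1)) ^ 2)\<bar>)))"

definition sigma1 :: "(int \<Rightarrow> complex) \<Rightarrow> nat \<Rightarrow> nat \<Rightarrow> int \<Rightarrow> ennreal" where
  "sigma1 w n s k =
    (\<Sum>\<^sub>\<infinity> js \<in> {js. length js = s \<and> (\<forall>j\<in>set js. even (j - int n) \<and> j \<noteq> int n)}.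
       ennreal (\<Prod>i<s. rr w ((if i = 0 then k else js!(i-1)) + js!i)
                         / \<bar>real_of_int (int n - js!i)\<bar>))"

end

theory Submission
  imports Defs "HOL-Analysis.Analysis"
begin


lemma ennsumm[simp]: "(f::'a\<Rightarrow>ennreal) summable_on A"
  by (simp add: nonneg_summable_on_complete)
lemma fin_le_infsum:
  fixes f :: "'a \<Rightarrow> ennreal"
  assumes "finite F" "F \<subseteq> A"
  shows "sum f F \<le> infsum f A"
proof -
  have "sum f F = infsum f F" using assms(1) by simp
  also have "\<dots> \<le> infsum f A"
    by (rule infsum_mono_neutral) (use assms in auto)
  finally show ?thesis .
qed

lemma infsum_Sigma_le:
  fixes f :: "'a \<times> 'b \<Rightarrow> ennreal"
  shows "infsum f (Sigma A B) \<le> infsum (\<lambda>x. infsum (\<lambda>y. f (x,y)) (B x)) A"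
proof (rule infsum_le_finite_sums)
  show "f summable_on Sigma A B" by simp
  fix F assume F: "finite F" "F \<subseteq> Sigma A B"
  define G where "G x = {y. (x,y) \<in> F}" for x
  have FG: "F = Sigma (fst ` F) G" unfolding G_def by force
  have finG: "finite (G x)" for x
  proof -
    have "G x \<subseteq> snd ` F" unfolding G_def by force
    thus ?thesis using F(1) finite_subset by blast
  qed
  have "sum f F = (\<Sum>x\<in>fst ` F. \<Sum>y\<in>G x. f (x,y))"
    apply (subst FG) apply (subst sum.Sigma) using F finG by auto
  also have "\<dots> \<le> (\<Sum>x\<in>fst ` F. infsum (\<lambda>y. f (x,y)) (B x))"
    apply (rule sum_mono) apply (rule fin_le_infsum) using finG F unfolding G_def by auto
  also have "\<dots> \<le> infsum (\<lambda>x. infsum (\<lambda>y. f (x,y)) (B x)) A"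
    apply (rule fin_le_infsum) using F by auto
  finally show "sum f F \<le> \<dots>" .
qed

lemma infsum_cmult_le:
  fixes f :: "'a \<Rightarrow> ennreal"
  shows "infsum (\<lambda>x. f x * c) A \<le> infsum f A * c"
proof (rule infsum_le_finite_sums)
  fix F assume F: "finite F" "F \<subseteq> A"
  have "sum (\<lambda>x. f x * c) F = sum f F * c" by (simp add: sum_distrib_right)
  also have "\<dots> \<le> infsum f A * c" by (rule mult_right_mono) (use fin_le_infsum F in auto)
  finally show "sum (\<lambda>x. f x * c) F \<le> infsum f A * c" .
qed simp

lemma infsum_add_le:
  fixes f g :: "'a \<Rightarrow> ennreal"
  shows "infsum (\<lambda>x. f x + g x) A \<le> infsum f A + infsum g A"
proof (rule infsum_le_finite_sums)
  fix F assume F: "finite F" "F \<subseteq> A"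
  have "sum (\<lambda>x. f x + g x) F = sum f F + sum g F" by (simp add: sum.distrib)
  also have "\<dots> \<le> infsum f A + infsum g A" by (intro add_mono fin_le_infsum F)+
  finally show "sum (\<lambda>x. f x + g x) F \<le> infsum f A + infsum g A" .
qed simp

lemma infsum_Un_le:
  fixes f :: "'a \<Rightarrow> ennreal"
  shows "infsum f (A \<union> B) \<le> infsum f A + infsum f B"
proof (rule infsum_le_finite_sums)
  fix F assume F: "finite F" "F \<subseteq> A \<union> B"
  have "sum f F \<le> sum f (F \<inter> A) + sum f (F - A)"
    by (metis F(1) order_refl sum.Int_Diff)
  also have "\<dots> \<le> infsum f A + infsum f B" by (intro add_mono fin_le_infsum) (use F in auto)
  finally show "sum f F \<le> infsum f A + infsum f B" .
qed simp

lemma harm_le_ln: "harm n \<le> ln (real n) + (1::real)" if n1: "n \<ge> 1"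
proof -
  obtain k where k: "n = Suc k" using n1 by (cases n) auto
  have "harm (Suc k) - ln (real (Suc k)) \<le> harm (Suc 0) - ln (real (Suc 0))"
    using decseq_harm_diff_ln unfolding decseq_def by (metis le0)
  moreover have "harm 0 = (0::real)" by (simp add: harm_altdef)
  ultimately show ?thesis using k by (simp add: harm_Suc)
qed



lemma sum_shift_harm: "(\<Sum>u<N. 1 / (real n + real u + 1)) = harm (n+N) - harm n"
proof (induction N)
  case 0 then show ?case by simp
next
  case (Suc N)
  have "harm (n + Suc N) = harm (n+N) + 1 / (real n + real N + 1)"
    by (simp add: harm_Suc inverse_eq_divide add_ac)
  then show ?case using Suc by simp
qed

lemma sum_harm: "(\<Sum>u<N. 1 / (real u + 1)) = harm N"
  by (simp add: harm_altdef field_simps)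

lemma tail_real:
  assumes "n \<ge> 1"
  shows "(\<Sum>u<N. 1 / (4 * ((real u + 1) * (real n + real u + 1)))) \<le> harm n / (4 * real n)"
proof -
  have eq: "1 / (4 * ((real u + 1) * (real n + real u + 1)))
     = (1 / (real u + 1) - 1 / (real n + real u + 1)) / (4 * real n)" for u
  proof -
    have "real n > 0" using assms by simp
    then show ?thesis by (simp add: divide_simps)
  qed
  have "(\<Sum>u<N. 1 / (4 * ((real u + 1) * (real n + real u + 1))))
      = ((\<Sum>u<N. 1 / (real u + 1)) - (\<Sum>u<N. 1 / (real n + real u + 1))) / (4 * real n)"
    unfolding eq by (simp add: sum_divide_distrib[symmetric] sum_subtractf)
  also have "\<dots> = (harm N - harm (n+N) + harm n) / (4 * real n)"
    by (simp add: sum_shift_harm sum_harm)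
  also have "\<dots> \<le> harm n / (4 * real n)"
    using harm_mono[of N "n+N", where 'a=real] assms
    by (intro divide_right_mono) auto
  finally show ?thesis .
qed

lemma tail_enn:
  assumes "n \<ge> 1"
  shows "infsum (\<lambda>u::nat. ennreal (1 / (4 * ((real u + 1) * (real n + real u + 1))))) UNIV
     \<le> ennreal (harm n / (4 * real n))"
proof (rule infsum_le_finite_sums)
  fix F :: "nat set" assume F: "finite F" "F \<subseteq> UNIV"
  obtain k where k: "F \<subseteq> {..<k}" using finite_nat_bounded F by blast
  have "sum (\<lambda>u::nat. ennreal (1 / (4 * ((real u + 1) * (real n + real u + 1))))) F
     \<le> sum (\<lambda>u::nat. ennreal (1 / (4 * ((real u + 1) * (real n + real u + 1))))) {..<k}"
    by (rule sum_mono2) (use k in auto)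
  also have "\<dots> = ennreal (\<Sum>u<k. 1 / (4 * ((real u + 1) * (real n + real u + 1))))"
    by (rule sum_ennreal) simp
  also have "\<dots> \<le> ennreal (harm n / (4 * real n))"
    by (rule ennreal_leI) (rule tail_real[OF assms])
  finally show "sum (\<lambda>u::nat. ennreal (1 / (4 * ((real u + 1) * (real n + real u + 1))))) F
     \<le> ennreal (harm n / (4 * real n))" .
qed simp

lemma mid_real:
  assumes "n \<ge> 1"
  shows "(\<Sum>u\<in>{1..<n}. 1 / (4 * (real u * (real n - real u)))) \<le> harm n / (2 * real n)"
proof -
  have eq: "1 / (4 * (real u * (real n - real u)))
     = (1 / real u + 1 / (real n - real u)) / (4 * real n)" if "u \<in> {1..<n}" for u
    using that by (simp add: field_simps)
  have rfl: "(\<Sum>u\<in>{1..<n}. 1 / (real n - real u)) = (\<Sum>u\<in>{1..<n}. 1 / real u)"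
    by (rule sum.reindex_bij_witness[where i="\<lambda>u. n - u" and j="\<lambda>u. n - u"]) auto
  have h: "(\<Sum>u\<in>{1..<n}. 1 / real u) \<le> harm n"
  proof -
    have "(\<Sum>u\<in>{1..<n}. 1 / real u) \<le> (\<Sum>u\<in>{1..n}. 1 / real u)"
      by (rule sum_mono2) auto
    then show ?thesis unfolding harm_def by (simp add: inverse_eq_divide)
  qed
  have "(\<Sum>u\<in>{1..<n}. 1 / (4 * (real u * (real n - real u))))
      = (\<Sum>u\<in>{1..<n}. (1 / real u + 1 / (real n - real u)) / (4 * real n))"
    by (rule sum.cong[OF refl eq])
  also have "\<dots> = (\<Sum>u\<in>{1..<n}. (1 / real u + 1 / (real n - real u))) / (4 * real n)"
    by (simp only: sum_divide_distrib)
  also have "\<dots> = ((\<Sum>u\<in>{1..<n}. 1 / real u) + (\<Sum>u\<in>{1..<n}. 1 / (real n - real u))) / (4 * real n)"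
    by (simp only: sum.distrib)
  also have "\<dots> \<le> (harm n + harm n) / (4 * real n)"
    using h rfl assms by (intro divide_right_mono) auto
  also have "\<dots> = harm n / (2 * real n)" by simp
  finally show ?thesis .
qed




lemma const_bound:
  assumes n: "n \<ge> 1"
  shows "infsum (\<lambda>k::int. ennreal (1 / \<bar>real_of_int (int n ^ 2 - k ^ 2)\<bar>))
           {k. even (k - int n) \<and> k \<noteq> int n \<and> k \<noteq> - int n}
         \<le> ennreal (2 * ln (6 * real n) / real n)"
proof -
  define g where "g k = ennreal (1 / \<bar>real_of_int (int n ^ 2 - k ^ 2)\<bar>)" for k :: int
  define A where "A = {k. even (k - int n) \<and> k \<noteq> int n \<and> k \<noteq> - int n}"
  define f1 where "f1 u = int n + 2 + 2 * int u" for u :: nat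
  define f3 where "f3 u = - (int n + 2 + 2 * int u)" for u :: nat
  define f2 where "f2 u = int n - 2 * int u" for u :: nat
  define h where "h u = ennreal (1 / (4 * ((real u + 1) * (real n + real u + 1))))" for u :: nat
  have cover: "A \<subseteq> range f1 \<union> f2 ` {1..<n} \<union> range f3"
  proof
    fix k assume "k \<in> A"
    then have ev: "even (k - int n)" and k1: "k \<noteq> int n" and k2: "k \<noteq> - int n"
      unfolding A_def by auto
    from ev obtain d where d: "k - int n = 2 * d" by (rule evenE) simp
    consider "d > 0" | "d < - int n" | "- int n < d \<and> d < 0" using k1 k2 d by linarith
    then show "k \<in> range f1 \<union> f2 ` {1..<n} \<union> range f3"
    proof cases
      case 1
      then have "k = f1 (nat (d - 1))" using d unfolding f1_def by simp
      then show ?thesis by auto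
    next
      case 2
      then have "k = f3 (nat (- d - int n - 1))" using d unfolding f3_def by simp
      then show ?thesis by auto
    next
      case 3
      then have "k = f2 (nat (- d))" "nat (- d) \<in> {1..<n}" using d unfolding f2_def by auto
      then show ?thesis by auto
    qed
  qed
  have g1: "g (f1 u) = h u" for u
  proof -
    have "real_of_int (int n ^ 2 - (f1 u) ^ 2) = - (4 * ((real u + 1) * (real n + real u + 1)))"
      unfolding f1_def by (simp add: algebra_simps power2_eq_square)
    then show ?thesis unfolding g_def h_def by simp
  qed
  have g3: "g (f3 u) = h u" for u
  proof -
    have "real_of_int (int n ^ 2 - (f3 u) ^ 2) = - (4 * ((real u + 1) * (real n + real u + 1)))"
      unfolding f3_def by (simp add: algebra_simps power2_eq_square)
    then show ?thesis unfolding g_def h_def by simp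
  qed
  have g2: "g (f2 u) = ennreal (1 / (4 * (real u * (real n - real u))))" if "u \<in> {1..<n}" for u
  proof -
    have "real_of_int (int n ^ 2 - (f2 u) ^ 2) = 4 * (real u * (real n - real u))"
      unfolding f2_def by (simp add: algebra_simps power2_eq_square)
    moreover have "4 * (real u * (real n - real u)) \<ge> 0" using that by auto
    ultimately show ?thesis unfolding g_def by simp
  qed
  have inj1: "inj f1" unfolding f1_def inj_def by auto
  have inj3: "inj f3" unfolding f3_def inj_def by auto
  have inj2: "inj_on f2 {1..<n}" unfolding f2_def inj_on_def by auto
  have S1: "infsum g (range f1) \<le> ennreal (harm n / (4 * real n))"
    using tail_enn[OF n] by (simp add: infsum_reindex[OF inj1] o_def g1 h_def)
  have S3: "infsum g (range f3) \<le> ennreal (harm n / (4 * real n))"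
    using tail_enn[OF n] by (simp add: infsum_reindex[OF inj3] o_def g3 h_def)
  have S2: "infsum g (f2 ` {1..<n}) \<le> ennreal (harm n / (2 * real n))"
  proof -
    have "infsum g (f2 ` {1..<n}) = sum (\<lambda>u. ennreal (1 / (4 * (real u * (real n - real u))))) {1..<n}"
    proof -
      have "infsum g (f2 ` {1..<n}) = infsum (g \<circ> f2) {1..<n}" by (rule infsum_reindex[OF inj2])
      also have "\<dots> = sum (g \<circ> f2) {1..<n}" by (rule infsum_finite) simp
      also have "\<dots> = sum (\<lambda>u. ennreal (1 / (4 * (real u * (real n - real u))))) {1..<n}"
        by (rule sum.cong[OF refl]) (simp add: g2)
      finally show ?thesis .
    qed
    also have "\<dots> = ennreal (\<Sum>u\<in>{1..<n}. 1 / (4 * (real u * (real n - real u))))"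
      by (rule sum_ennreal) auto
    also have "\<dots> \<le> ennreal (harm n / (2 * real n))"
      by (rule ennreal_leI) (rule mid_real[OF n])
    finally show ?thesis .
  qed
  have "infsum g A \<le> infsum g (range f1 \<union> f2 ` {1..<n} \<union> range f3)"
    by (rule infsum_mono_neutral) (use cover in auto)
  also have "\<dots> \<le> infsum g (range f1) + infsum g (f2 ` {1..<n}) + infsum g (range f3)"
  proof -
    have "infsum g (range f1 \<union> f2 ` {1..<n} \<union> range f3) \<le> infsum g (range f1 \<union> f2 ` {1..<n}) + infsum g (range f3)"
      by (rule infsum_Un_le)
    also have "\<dots> \<le> infsum g (range f1) + infsum g (f2 ` {1..<n}) + infsum g (range f3)"
      by (intro add_mono infsum_Un_le order_refl)
    finally show ?thesis .
  qed
  also have "\<dots> \<le> ennreal (harm n / (4 * real n)) + ennreal (harm n / (2 * real n))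
                    + ennreal (harm n / (4 * real n))"
    by (intro add_mono S1 S2 S3)
  also have "\<dots> = ennreal (harm n / real n)"
    by (simp add: ennreal_plus[symmetric] harm_nonneg del: ennreal_plus)
  also have "\<dots> \<le> ennreal (2 * ln (6 * real n) / real n)"
  proof (rule ennreal_leI, rule divide_right_mono)
    have "harm n \<le> ln (real n) + 1" by (rule harm_le_ln[OF n])
    moreover have "ln (6 * real n) = ln 6 + ln (real n)" using n by (simp add: ln_mult)
    moreover have "ln (6::real) \<ge> 1"
    proof -
      have "exp 1 \<le> (6::real)" using exp_le by simp
      then show ?thesis using ln_le_cancel_iff[of "exp 1" 6] by simp
    qed
    moreover have "ln (real n) \<ge> 0" using n by simp
    ultimately show "harm n \<le> 2 * ln (6 * real n)" by linarith
  qed simp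
  finally show ?thesis unfolding g_def A_def .
qed




lemma rr_nonneg: "rr w x \<ge> 0" unfolding rr_def by (simp add: le_max_iff_disj)
lemma rr_neg: "rr w (- x) = rr w x" unfolding rr_def by auto

definition Wf :: "(int\<Rightarrow>complex) \<Rightarrow> nat \<Rightarrow> int list \<Rightarrow> int \<Rightarrow> real" where
  "Wf w n ys k = (\<Prod>p<length ys. rr w ((ys@[k])!p + (ys@[k])!(Suc p)) / \<bar>real_of_int (int n + (ys@[k])!p)\<bar>)"

lemma Wf_nonneg: "Wf w n ys k \<ge> 0"
  unfolding Wf_def by (intro prod_nonneg divide_nonneg_nonneg rr_nonneg) auto

lemma summand_eq:
  assumes "length ys = c"
  shows "rr w (m + (j#ys@[k])!0)
         * (\<Prod>i\<in>{1..<Suc c}. rr w ((j#ys@[k])!(i-1) + (j#ys@[k])!i) / \<bar>real_of_int (int n + (j#ys@[k])!i)\<bar>)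
         * (rr w ((j#ys@[k])!c + (j#ys@[k])!(Suc c)) / \<bar>real_of_int (int n ^ 2 - ((j#ys@[k])!(Suc c)) ^ 2)\<bar>)
       = (rr w (m + j) * rr w (j + (ys@[k])!0)) * (Wf w n ys k / \<bar>real_of_int (int n ^ 2 - k ^ 2)\<bar>)"
proof -
  define zs where "zs = ys @ [k]"
  define js where "js = j # zs"
  define h where "h p = rr w (js!p + js!(Suc p))" for p
  define D where "D p = \<bar>real_of_int (int n + zs!p)\<bar>" for p
  have jsS: "js!(Suc i) = zs!i" for i unfolding js_def by simp
  have zsc: "zs!c = k" unfolding zs_def assms[symmetric] by simp
  have P1: "(\<Prod>i\<in>{1..<Suc c}. rr w (js!(i-1) + js!i) / \<bar>real_of_int (int n + js!i)\<bar>)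
          = (\<Prod>p<c. h p / D p)"
  proof -
    have "(\<Prod>i\<in>{1..<Suc c}. rr w (js!(i-1) + js!i) / \<bar>real_of_int (int n + js!i)\<bar>)
        = (\<Prod>i\<in>{0..<c}. rr w (js!(Suc i-1) + js!(Suc i)) / \<bar>real_of_int (int n + js!(Suc i))\<bar>)"
      using prod.shift_bounds_Suc_ivl[of "\<lambda>i. rr w (js!(i-1) + js!i) / \<bar>real_of_int (int n + js!i)\<bar>" 0 c]
      by simp
    also have "\<dots> = (\<Prod>p<c. h p / D p)"
      by (simp add: atLeast0LessThan h_def D_def jsS)
    finally show ?thesis .
  qed
  have P2: "(\<Prod>p<c. h p) * h c = h 0 * (\<Prod>p<c. h (Suc p))"
    by (metis prod.lessThan_Suc prod.lessThan_Suc_shift)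
  have W: "Wf w n ys k = (\<Prod>p<c. h (Suc p) / D p)"
    unfolding Wf_def h_def D_def using assms by (simp add: zs_def jsS)
  have jsSc: "js!(Suc c) = k" using jsS zsc by simp
  have "rr w (m + js!0)
         * (\<Prod>i\<in>{1..<Suc c}. rr w (js!(i-1) + js!i) / \<bar>real_of_int (int n + js!i)\<bar>)
         * (rr w (js!c + js!(Suc c)) / \<bar>real_of_int (int n ^ 2 - (js!(Suc c)) ^ 2)\<bar>)
      = rr w (m + js!0) * (\<Prod>p<c. h p / D p) * (h c / \<bar>real_of_int (int n ^ 2 - k ^ 2)\<bar>)"
    by (unfold P1 jsSc h_def) (rule refl)
  also have "\<dots> = rr w (m + j) * ((\<Prod>p<c. h p) * h c) / ((\<Prod>p<c. D p) * \<bar>real_of_int (int n ^ 2 - k ^ 2)\<bar>)"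
    by (simp add: js_def prod_dividef)
  also have "\<dots> = (rr w (m + j) * h 0) * ((\<Prod>p<c. h (Suc p)) / (\<Prod>p<c. D p) / \<bar>real_of_int (int n ^ 2 - k ^ 2)\<bar>)"
    unfolding P2 by simp
  also have "\<dots> = (rr w (m + j) * rr w (j + (ys@[k])!0)) * (Wf w n ys k / \<bar>real_of_int (int n ^ 2 - k ^ 2)\<bar>)"
    unfolding W by (simp add: prod_dividef h_def js_def zs_def)
  finally show ?thesis unfolding js_def zs_def .
qed




definition S1f :: "(int\<Rightarrow>complex) \<Rightarrow> nat \<Rightarrow> nat \<Rightarrow> int \<Rightarrow> int list \<Rightarrow> real" where
  "S1f w n s k js = (\<Prod>i<s. rr w ((if i = 0 then k else js!(i-1)) + js!i) / \<bar>real_of_int (int n - js!i)\<bar>)"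

lemma Wf_S1f:
  assumes "length ys = c"
  shows "Wf w n ys k = S1f w n c (- k) (map uminus (rev ys))"
proof -
  define zs where "zs = map uminus (rev ys)"
  define g where "g i = rr w ((if i = 0 then - k else zs!(i-1)) + zs!i) / \<bar>real_of_int (int n - zs!i)\<bar>" for i
  define f where "f p = rr w ((ys@[k])!p + (ys@[k])!(Suc p)) / \<bar>real_of_int (int n + (ys@[k])!p)\<bar>" for p
  have "(\<Prod>p<c. f p) = (\<Prod>i<c. g i)"
  proof (rule prod.reindex_bij_witness[where i="\<lambda>p. c - 1 - p" and j="\<lambda>p. c - 1 - p"])
    fix p assume p: "p \<in> {..<c}"
    then have p': "p < c" by simp
    have z1: "zs ! (c - 1 - p) = - (ys ! p)"
      unfolding zs_def using p' assms by (simp add: rev_nth)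
    have a1: "(ys@[k])!p = ys!p" using p' assms by (simp add: nth_append)
    show "g (c - 1 - p) = f p"
    proof (cases "p = c - 1")
      case True
      then have "(ys@[k])!(Suc p) = k" using p' assms by (simp add: nth_append)
      moreover have "c - 1 - p = 0" using True by simp
      ultimately show ?thesis unfolding g_def f_def using z1 a1 rr_neg[of w "k + ys!p"]
        by (simp add: add.commute)
    next
      case False
      then have "(ys@[k])!(Suc p) = ys!(Suc p)" using p' assms False by (auto simp: nth_append)
      moreover have "c - 1 - p \<noteq> 0" using False p' by simp
      moreover have "zs ! (c - 1 - p - 1) = - (ys ! Suc p)"
        unfolding zs_def using p' False assms by (simp add: rev_nth)
      ultimately show ?thesis unfolding g_def f_def using z1 a1 rr_neg[of w "ys!(Suc p) + ys!p"]
        by (simp add: add.commute)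
    qed
  qed auto
  then show ?thesis unfolding Wf_def S1f_def assms f_def g_def zs_def by simp
qed




lemma cs_bound:
  assumes m: "even (m - int n)" and q: "even (q - int n)"
  shows "infsum (\<lambda>j. ennreal (rr w (m + j) * rr w (j + q)))
           {j. even (j - int n) \<and> j \<noteq> int n \<and> j \<noteq> - int n} \<le> l2sq w"
proof -
  define A where "A = {j. even (j - int n) \<and> j \<noteq> int n \<and> j \<noteq> - int n}"
  define g where "g x = ennreal ((rr w x)\<^sup>2)" for x
  define E where "E = {m::int. even m}"
  have l2: "l2sq w = infsum g E" unfolding l2sq_def g_def E_def ..
  have pt: "ennreal (rr w (m + j) * rr w (j + q)) \<le> g (m + j) * ennreal (1/2) + g (j + q) * ennreal (1/2)" for j
  proof -
    have "rr w (m + j) * rr w (j + q) \<le> (rr w (m + j))\<^sup>2 * (1/2) + (rr w (j + q))\<^sup>2 * (1/2)"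
      using sum_squares_bound[of "rr w (m + j)" "rr w (j + q)"] by (simp add: algebra_simps power2_eq_square)
    then have "ennreal (rr w (m + j) * rr w (j + q)) \<le> ennreal ((rr w (m + j))\<^sup>2 * (1/2) + (rr w (j + q))\<^sup>2 * (1/2))"
      by (rule ennreal_leI)
    also have "\<dots> = g (m + j) * ennreal (1/2) + g (j + q) * ennreal (1/2)"
      unfolding g_def
      apply (subst ennreal_plus)
        apply simp apply simp
      apply (subst ennreal_mult, simp, simp)
      apply (subst ennreal_mult, simp, simp)
      apply (rule refl)
      done
    finally show ?thesis .
  qed
  have sub1: "infsum (\<lambda>j. g (m + j)) A \<le> infsum g E"
  proof -
    have inj: "inj_on (\<lambda>j. m + j) A" by (auto simp: inj_on_def)
    have "infsum (\<lambda>j. g (m + j)) A = infsum g ((\<lambda>j. m + j) ` A)"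
      using infsum_reindex[OF inj, of g] by (simp add: o_def)
    also have "\<dots> \<le> infsum g E"
    proof (rule infsum_mono_neutral)
      show "x \<in> (\<lambda>j. m + j) ` A - E \<Longrightarrow> g x \<le> 0" for x
      proof -
        assume "x \<in> (\<lambda>j. m + j) ` A - E"
        then obtain j where "x = m + j" "even (j - int n)" "odd x" unfolding A_def E_def by auto
        then have False using m by presburger
        then show ?thesis ..
      qed
    qed auto
    finally show ?thesis .
  qed
  have sub2: "infsum (\<lambda>j. g (j + q)) A \<le> infsum g E"
  proof -
    have inj: "inj_on (\<lambda>j. j + q) A" by (auto simp: inj_on_def)
    have "infsum (\<lambda>j. g (j + q)) A = infsum g ((\<lambda>j. j + q) ` A)"
      using infsum_reindex[OF inj, of g] by (simp add: o_def)
    also have "\<dots> \<le> infsum g E"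
    proof (rule infsum_mono_neutral)
      show "x \<in> (\<lambda>j. j + q) ` A - E \<Longrightarrow> g x \<le> 0" for x
      proof -
        assume "x \<in> (\<lambda>j. j + q) ` A - E"
        then obtain j where "x = j + q" "even (j - int n)" "odd x" unfolding A_def E_def by auto
        then have False using q by presburger
        then show ?thesis ..
      qed
    qed auto
    finally show ?thesis .
  qed
  have "infsum (\<lambda>j. ennreal (rr w (m + j) * rr w (j + q))) A
      \<le> infsum (\<lambda>j. g (m + j) * ennreal (1/2) + g (j + q) * ennreal (1/2)) A"
    by (rule infsum_mono) (use pt in auto)
  also have "\<dots> \<le> infsum (\<lambda>j. g (m + j) * ennreal (1/2)) A + infsum (\<lambda>j. g (j + q) * ennreal (1/2)) A"
    by (rule infsum_add_le)
  also have "\<dots> \<le> infsum (\<lambda>j. g (m + j)) A * ennreal (1/2) + infsum (\<lambda>j. g (j + q)) A * ennreal (1/2)"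
    by (intro add_mono infsum_cmult_le)
  also have "\<dots> \<le> infsum g E * ennreal (1/2) + infsum g E * ennreal (1/2)"
    by (intro add_mono mult_right_mono sub1 sub2) auto
  also have "\<dots> = infsum g E * (ennreal (1/2) + ennreal (1/2))"
    by (simp add: distrib_left)
  also have "ennreal (1/2) + ennreal (1/2) = 1"
  proof -
    have "ennreal (1/2) + ennreal (1/2) = ennreal (1/2 + 1/2)" by (rule ennreal_plus[symmetric]) auto
    then show ?thesis by simp
  qed
  finally show ?thesis unfolding l2 A_def by simp
qed

lemma bij_lists:
  "bij_betw (\<lambda>((k,ys),j). j # ys @ [k]) (({j. Q j} \<times> {js. length js = c \<and> (\<forall>j\<in>set js. Q j)}) \<times> {j. Q j})
      {js. length js = Suc (Suc c) \<and> (\<forall>j\<in>set js. Q j)}"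
  unfolding bij_betw_def
proof
  show "inj_on (\<lambda>((k,ys),j). j # ys @ [k]) (({j. Q j} \<times> {js. length js = c \<and> (\<forall>j\<in>set js. Q j)}) \<times> {j. Q j})"
    by (auto simp: inj_on_def)
  show "(\<lambda>((k,ys),j). j # ys @ [k]) ` (({j. Q j} \<times> {js. length js = c \<and> (\<forall>j\<in>set js. Q j)}) \<times> {j. Q j})
      = {js. length js = Suc (Suc c) \<and> (\<forall>j\<in>set js. Q j)}"
  proof
    show "(\<lambda>((k,ys),j). j # ys @ [k]) ` (({j. Q j} \<times> {js. length js = c \<and> (\<forall>j\<in>set js. Q j)}) \<times> {j. Q j})
      \<subseteq> {js. length js = Suc (Suc c) \<and> (\<forall>j\<in>set js. Q j)}" by auto
  next
    show "{js. length js = Suc (Suc c) \<and> (\<forall>j\<in>set js. Q j)} \<subseteq> (\<lambda>((k,ys),j). j # ys @ [k]) ` (({j. Q j} \<times> {js. length js = c \<and> (\<forall>j\<in>set js. Q j)}) \<times> {j. Q j})"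
    proof
      fix js assume js: "js \<in> {js. length js = Suc (Suc c) \<and> (\<forall>j\<in>set js. Q j)}"
      then obtain j zs where jz: "js = j # zs" by (cases js) auto
      then have zne: "zs \<noteq> []" using js by auto
      have zs: "zs = butlast zs @ [last zs]" using zne by simp
      have "js = (\<lambda>((k,ys),j). j # ys @ [k]) ((last zs, butlast zs), j)" using jz zs by simp
      moreover have "((last zs, butlast zs), j) \<in> ({j. Q j} \<times> {js. length js = c \<and> (\<forall>j\<in>set js. Q j)}) \<times> {j. Q j}"
        using js jz zne by (auto dest: in_set_butlastD)
      ultimately show "js \<in> (\<lambda>((k,ys),j). j # ys @ [k]) ` (({j. Q j} \<times> {js. length js = c \<and> (\<forall>j\<in>set js. Q j)}) \<times> {j. Q j})"
        by blast
    qed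
  qed
qed




lemma T_bound:
  assumes k: "even (k - int n)"
  shows "infsum (\<lambda>ys. ennreal (Wf w n ys k))
           {js. length js = c \<and> (\<forall>j\<in>set js. even (j - int n) \<and> j \<noteq> int n \<and> j \<noteq> - int n)}
         \<le> sigma1 w n c (- k)"
proof -
  define L where "L = {js. length js = c \<and> (\<forall>j\<in>set js. even (j - int n) \<and> j \<noteq> int n \<and> j \<noteq> - int n)}"
  define B where "B = {js. length js = c \<and> (\<forall>j\<in>set js. even (j - int n) \<and> j \<noteq> int n)}"
  define \<phi> where "\<phi> ys = map uminus (rev ys)" for ys :: "int list"
  define f where "f zs = ennreal (S1f w n c (- k) zs)" for zs
  have inj: "inj_on \<phi> L"
  proof (rule inj_onI)
    fix x y assume "\<phi> x = \<phi> y"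
    then have "map uminus (\<phi> x) = map uminus (\<phi> y)" by simp
    then show "x = y" unfolding \<phi>_def by (simp add: comp_def)
  qed
  have "infsum (\<lambda>ys. ennreal (Wf w n ys k)) L = infsum (\<lambda>ys. f (\<phi> ys)) L"
    by (rule infsum_cong) (simp add: f_def \<phi>_def Wf_S1f L_def)
  also have "\<dots> = infsum f (\<phi> ` L)"
    using infsum_reindex[OF inj, of f] by (simp add: o_def)
  also have "\<dots> \<le> infsum f B"
  proof (rule infsum_mono_neutral)
    show "x \<in> \<phi> ` L - B \<Longrightarrow> f x \<le> 0" for x
    proof -
      assume "x \<in> \<phi> ` L - B"
      then obtain ys where "ys \<in> L" "x = \<phi> ys" "x \<notin> B" by auto
      then have False unfolding L_def B_def \<phi>_def by (auto simp: even_minus)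
      then show ?thesis ..
    qed
  qed auto
  also have "\<dots> = sigma1 w n c (- k)" unfolding sigma1_def f_def S1f_def B_def ..
  finally show ?thesis unfolding L_def .
qed




lemma main_bound:
  fixes w :: "int \<Rightarrow> complex" and n :: nat and m :: int
  assumes n: "n \<ge> 1" and m: "even (m - int n)"
    and hM: "\<And>k. even (k - int n) \<Longrightarrow> infsum (\<lambda>ys. ennreal (Wf w n ys k))
           {js. length js = c \<and> (\<forall>j\<in>set js. even (j - int n) \<and> j \<noteq> int n \<and> j \<noteq> - int n)} \<le> M"
  shows "sigma2 w n (Suc (Suc c)) m \<le> l2sq w * ennreal (2 * ln (6 * real n) / real n) * M"
proof -
  define Q where "Q j = (even (j - int n) \<and> j \<noteq> int n \<and> j \<noteq> - int n)" for j
  define A where "A = {j. Q j}"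
  define L where "L c' = {js. length js = c' \<and> (\<forall>j\<in>set js. Q j)}" for c'
  define E where "E k = \<bar>real_of_int (int n ^ 2 - k ^ 2)\<bar>" for k
  define F where "F js = ennreal (rr w (m + js!0)
         * (\<Prod>i\<in>{1..<Suc c}. rr w (js!(i-1) + js!i) / \<bar>real_of_int (int n + js!i)\<bar>)
         * (rr w (js!c + js!(Suc c)) / \<bar>real_of_int (int n ^ 2 - (js!(Suc c)) ^ 2)\<bar>))" for js
  define G where "G p = F (case p of ((k,ys),j) \<Rightarrow> j # ys @ [k])" for p :: "(int \<times> int list) \<times> int"
  define C where "C = ennreal (2 * ln (6 * real n) / real n)"
  have s2: "sigma2 w n (Suc (Suc c)) m = infsum F (L (Suc (Suc c)))"
    unfolding sigma2_def F_def L_def Q_def by simp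
  also have "\<dots> = infsum G ((A \<times> L c) \<times> A)"
    using infsum_reindex_bij_betw[OF bij_lists[of Q c], of F]
    unfolding G_def A_def L_def by (simp add: case_prod_beta')
  also have "\<dots> \<le> infsum (\<lambda>x. infsum (\<lambda>j. G (x,j)) A) (A \<times> L c)"
    by (rule infsum_Sigma_le)
  also have "\<dots> \<le> infsum (\<lambda>x. l2sq w * ennreal (Wf w n (snd x) (fst x) / E (fst x))) (A \<times> L c)"
  proof (rule infsum_mono)
    fix x assume x: "x \<in> A \<times> L c"
    obtain k ys where kys: "x = (k, ys)" by (cases x)
    have len: "length ys = c" and ysQ: "\<forall>j\<in>set ys. Q j" and kQ: "Q k"
      using x kys unfolding A_def L_def by auto
    define q where "q = (ys @ [k]) ! 0"
    have "q \<in> set (ys @ [k])" unfolding q_def by (rule nth_mem) simp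
    then have qQ: "Q q" using ysQ kQ by auto
    have Gx: "G (x, j) = ennreal (rr w (m + j) * rr w (j + q)) * ennreal (Wf w n ys k / E k)" for j
    proof -
      have "G (x, j) = ennreal ((rr w (m + j) * rr w (j + q)) * (Wf w n ys k / E k))"
        unfolding G_def F_def kys q_def E_def using summand_eq[OF len, of w m j k n] by simp
      also have "\<dots> = ennreal (rr w (m + j) * rr w (j + q)) * ennreal (Wf w n ys k / E k)"
        by (rule ennreal_mult) (auto intro: mult_nonneg_nonneg rr_nonneg divide_nonneg_nonneg Wf_nonneg simp: E_def)
      finally show ?thesis .
    qed
    have "infsum (\<lambda>j. G (x,j)) A
        = infsum (\<lambda>j. ennreal (rr w (m + j) * rr w (j + q)) * ennreal (Wf w n ys k / E k)) A"
      by (simp add: Gx)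
    also have "\<dots> \<le> infsum (\<lambda>j. ennreal (rr w (m + j) * rr w (j + q))) A * ennreal (Wf w n ys k / E k)"
      by (rule infsum_cmult_le)
    also have "\<dots> \<le> l2sq w * ennreal (Wf w n ys k / E k)"
      by (rule mult_right_mono) (use cs_bound[OF m, of q w] qQ in \<open>auto simp: A_def Q_def\<close>)
    finally show "infsum (\<lambda>j. G (x,j)) A \<le> l2sq w * ennreal (Wf w n (snd x) (fst x) / E (fst x))"
      using kys by simp
  qed simp_all
  also have "\<dots> \<le> infsum (\<lambda>k. infsum (\<lambda>ys. l2sq w * ennreal (Wf w n ys k / E k)) (L c)) A"
    using infsum_Sigma_le[of "\<lambda>x. l2sq w * ennreal (Wf w n (snd x) (fst x) / E (fst x))" A "\<lambda>_. L c"]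
    by simp
  also have "\<dots> \<le> infsum (\<lambda>k. ennreal (1 / E k) * (l2sq w * M)) A"
  proof (rule infsum_mono)
    fix k assume k: "k \<in> A"
    have eq: "l2sq w * ennreal (Wf w n ys k / E k) = ennreal (Wf w n ys k) * (l2sq w * ennreal (1 / E k))" for ys
    proof -
      have "ennreal (Wf w n ys k / E k) = ennreal (Wf w n ys k) * ennreal (1 / E k)"
        using Wf_nonneg[of w n ys k] by (simp add: ennreal_mult[symmetric] E_def)
      then show ?thesis by (simp add: mult_ac)
    qed
    have "infsum (\<lambda>ys. l2sq w * ennreal (Wf w n ys k / E k)) (L c)
        = infsum (\<lambda>ys. ennreal (Wf w n ys k) * (l2sq w * ennreal (1 / E k))) (L c)"
      by (simp add: eq)
    also have "\<dots> \<le> infsum (\<lambda>ys. ennreal (Wf w n ys k)) (L c) * (l2sq w * ennreal (1 / E k))"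
      by (rule infsum_cmult_le)
    also have "\<dots> \<le> M * (l2sq w * ennreal (1 / E k))"
      by (rule mult_right_mono) (use hM k in \<open>auto simp: L_def A_def Q_def\<close>)
    finally show "infsum (\<lambda>ys. l2sq w * ennreal (Wf w n ys k / E k)) (L c) \<le> ennreal (1 / E k) * (l2sq w * M)"
      by (simp add: mult_ac)
  qed simp_all
  also have "\<dots> \<le> infsum (\<lambda>k. ennreal (1 / E k)) A * (l2sq w * M)"
    by (rule infsum_cmult_le)
  also have "\<dots> \<le> C * (l2sq w * M)"
    by (rule mult_right_mono) (use const_bound[OF n] in \<open>auto simp: C_def E_def A_def Q_def\<close>)
  finally show ?thesis unfolding C_def by (simp add: mult_ac)
qed


theorem lemma4:
  fixes w :: "int \<Rightarrow> complex" and n :: nat and m :: int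
  assumes l2: "(\<lambda>m. (cmod (w m))\<^sup>2) summable_on {m::int. even m}"
    and n: "n \<ge> 1"
    and m: "even (m - int n)"
  shows "sigma2 w n 2 m \<le> l2sq w * ennreal (2 * ln (6 * real n) / real n)
    \<and> (\<forall>s\<ge>3. sigma2 w n s m \<le> l2sq w * ennreal (2 * ln (6 * real n) / real n)
              * (SUP k\<in>{k::int. even (k - int n)}. sigma1 w n (s - 2) k))"
proof
  have hM0: "infsum (\<lambda>ys. ennreal (Wf w n ys k))
           {js. length js = 0 \<and> (\<forall>j\<in>set js. even (j - int n) \<and> j \<noteq> int n \<and> j \<noteq> - int n)} \<le> 1" for k
  proof -
    have "{js::int list. length js = 0 \<and> (\<forall>j\<in>set js. even (j - int n) \<and> j \<noteq> int n \<and> j \<noteq> - int n)} = {[]}"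
      by auto
    then show ?thesis by (simp add: Wf_def)
  qed
  have "sigma2 w n (Suc (Suc 0)) m \<le> l2sq w * ennreal (2 * ln (6 * real n) / real n) * 1"
    by (rule main_bound[OF n m hM0])
  then show "sigma2 w n 2 m \<le> l2sq w * ennreal (2 * ln (6 * real n) / real n)"
    by (simp add: numeral_2_eq_2)
next
  show "\<forall>s\<ge>3. sigma2 w n s m \<le> l2sq w * ennreal (2 * ln (6 * real n) / real n)
              * (SUP k\<in>{k::int. even (k - int n)}. sigma1 w n (s - 2) k)"
  proof (intro allI impI)
    fix s :: nat assume s: "s \<ge> 3"
    then obtain c where c: "s = Suc (Suc c)" by (metis add_2_eq_Suc le_Suc_ex numeral_3_eq_3 le_SucE Suc_le_D)
    have hM: "infsum (\<lambda>ys. ennreal (Wf w n ys k))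
           {js. length js = c \<and> (\<forall>j\<in>set js. even (j - int n) \<and> j \<noteq> int n \<and> j \<noteq> - int n)}
           \<le> (SUP k\<in>{k::int. even (k - int n)}. sigma1 w n c k)" if k: "even (k - int n)" for k
    proof -
      have "- k \<in> {k::int. even (k - int n)}" using k by simp
      then have "sigma1 w n c (- k) \<le> (SUP k\<in>{k::int. even (k - int n)}. sigma1 w n c k)"
        by (rule SUP_upper)
      then show ?thesis using T_bound[OF k, of w c] by (rule order_trans[rotated])
    qed
    have "sigma2 w n (Suc (Suc c)) m \<le> l2sq w * ennreal (2 * ln (6 * real n) / real n)
              * (SUP k\<in>{k::int. even (k - int n)}. sigma1 w n c k)"
      by (rule main_bound[OF n m hM])
    then show "sigma2 w n s m \<le> l2sq w * ennreal (2 * ln (6 * real n) / real n)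
              * (SUP k\<in>{k::int. even (k - int n)}. sigma1 w n (s - 2) k)"
      using c by simp
  qed
qed

end
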